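(* Let $M,N$ be weights of $\mathbb{R}^m,\mathbb{R}^n$, let $A\in\mathbb{R}^{m\times n}$ with $MA=AN$, and let $K\subseteq\mathbb{R}^n$ be a closed cone. Then $$\big((A^{[\dagger]})^{[*]}\circ I\circ K^{[*]}\big)^{[*]}\subseteq A\circ I\circ K+\mathcal{N}\big((A\circ I)^{[*]}\big).$$ If moreover $A^{[\dagger]}\circ A\circ K\subseteq K$, then equality holds.
   Context: A weight is a real symmetric matrix $W$ with $W^2=I$. $\mathbb{R}^m$ and $\mathbb{R}^n$ carry weights $M\in\mathbb{R}^{m\times m}$ and $N\in\mathbb{R}^{n\times n}$, respectively. The indefinite inner product on the space with weight $W$ is $[x,y]=\langle x,Wy\rangle$. Indefinite matrix product: if $B$ has $p$ columns and $C$ has $p$ rows (or is a vector in $\mathbb{R}^p$), $p\in\{m,n\}$, and $W$ is the weight of $\mathbb{R}^p$, then $B\circ C:=BWC$. $I$ denotes an identity matrix of the appropriate size. Indefinite adjoint of $B\in\mathbb{R}^{p\times q}$: $B^{[*]}:=W_qB^TW_p$, where $W_p,W_q$ are the weights of $\mathbb{R}^p,\mathbb{R}^q$. Indefinite Moore–Penrose inverse: $A^{[\dagger]}$ is the unique $X\in\mathbb{R}^{n\times m}$ such that - $A\circ X\circ A=A$, - $X\circ A\circ X=X$, - $(A\circ X)^{[*]}=A\circ X$, - $(X\circ A)^{[*]}=X\circ A$. It equals $NA^\dagger M$. Range and null space: for a matrix $B$ with $q$ columns, $\mathcal{R}(B)=\{B\circ x:x\in\mathbb{R}^q\}$ and $\mathcal{N}(B)=\{x\in\mathbb{R}^q:B\circ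 x=0\}$. A cone is a nonempty set closed under addition and under multiplication by nonnegative scalars. For $S$ a subset of $\mathbb{R}^p$ with weight $W$, the dual is $S^{[*]}=\{x\in\mathbb{R}^p:[x,t]\ge0\ \forall t\in S\}$; duals of subsets of $\mathbb{R}^m$ use $M$. For a matrix $B$ and a set $S$, $B\circ S=\{B\circ s:s\in S\}$. The sum of sets is the Minkowski sum. *)

theory Defs
  imports "HOL-Analysis.Analysis"
begin

definition is_weight :: "real^'p^'p \<Rightarrow> bool" where
  "is_weight W \<longleftrightarrow> transpose W = W \<and> W ** W = mat 1"

definition iprod :: "real^'p^'p \<Rightarrow> real^'p^'a \<Rightarrow> real^'b^'p \<Rightarrow> real^'b^'a" where
  "iprod W B C = B ** W ** C"

definition iprodv :: "real^'p^'p \<Rightarrow> real^'p^'a \<Rightarrow> real^'p \<Rightarrow> real^'a" where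
  "iprodv W B x = B *v (W *v x)"

definition iadj :: "real^'p^'p \<Rightarrow> real^'q^'q \<Rightarrow> real^'q^'p \<Rightarrow> real^'p^'q" where
  "iadj Wp Wq B = Wq ** transpose B ** Wp"

definition impinv :: "real^'m^'m \<Rightarrow> real^'n^'n \<Rightarrow> real^'n^'m \<Rightarrow> real^'m^'n" where
  "impinv M N A = (THE X.
      iprod M (iprod N A X) A = A \<and>
      iprod N (iprod M X A) X = X \<and>
      iadj M M (iprod N A X) = iprod N A X \<and>
      iadj N N (iprod M X A) = iprod M X A)"

definition inull :: "real^'q^'q \<Rightarrow> real^'q^'p \<Rightarrow> (real^'q) set" where
  "inull W B = {x. iprodv W B x = 0}"

definition idual :: "real^'p^'p \<Rightarrow> (real^'p) set \<Rightarrow> (real^'p) set" where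
  "idual W S = {x. \<forall>t\<in>S. x \<bullet> (W *v t) \<ge> 0}"

definition msum :: "('a::plus) set \<Rightarrow> 'a set \<Rightarrow> 'a set" where
  "msum X Y = {x + y | x y. x \<in> X \<and> y \<in> Y}"

end

theory Submission
  imports Defs
begin


definition proj :: "'a::euclidean_space set \<Rightarrow> 'a \<Rightarrow> 'a" where
  "proj S x = (SOME y. y \<in> span S \<and> (\<forall>w\<in>span S. orthogonal (x - y) w))"

lemma proj_ex: fixes S :: "'a::euclidean_space set" shows "\<exists>y. y \<in> span S \<and> (\<forall>w\<in>span S. orthogonal (x - y) w)"
proof -
  obtain y z where "y \<in> span S" "\<And>w. w \<in> span S \<Longrightarrow> orthogonal z w" "x = y + z"
    using orthogonal_subspace_decomp_exists[of S x] by blast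
  then show ?thesis by (intro exI[of _ y]) auto
qed

lemma proj_props: "proj S x \<in> span S" "\<And>w. w \<in> span S \<Longrightarrow> orthogonal (x - proj S x) w"
  using someI_ex[OF proj_ex[of S x]] unfolding proj_def by auto

lemma proj_unique:
  assumes "y \<in> span S" "\<And>w. w \<in> span S \<Longrightarrow> orthogonal (x - y) w"
  shows "proj S x = y"
proof -
  let ?d = "proj S x - y"
  have d: "?d \<in> span S" using assms(1) proj_props(1) span_diff by blast
  have "?d = (x - y) - (x - proj S x)" by simp
  then have "inner ?d ?d = inner (x - y) ?d - inner (x - proj S x) ?d"
    by (metis inner_diff_left)
  also have "\<dots> = 0" using assms(2)[OF d] proj_props(2)[OF d] by (simp add: orthogonal_def)
  finally show ?thesis by simp
qed

lemma proj_id: "x \<in> span S \<Longrightarrow> proj S x = x"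
  by (rule proj_unique) (auto simp: orthogonal_def)

lemma proj_add: "proj S (x + y) = proj S x + proj S y"
proof (rule proj_unique)
  show "proj S x + proj S y \<in> span S" by (simp add: proj_props(1) span_add)
  fix w assume w: "w \<in> span S"
  have "x + y - (proj S x + proj S y) = (x - proj S x) + (y - proj S y)" by simp
  then show "orthogonal (x + y - (proj S x + proj S y)) w"
    unfolding \<open>x + y - (proj S x + proj S y) = (x - proj S x) + (y - proj S y)\<close> using proj_props(2)[OF w, of x] proj_props(2)[OF w, of y]
    by (simp add: orthogonal_def inner_add_left)
qed

lemma proj_scale: "proj S (c *\<^sub>R x) = c *\<^sub>R proj S x"
proof (rule proj_unique)
  show "c *\<^sub>R proj S x \<in> span S" by (simp add: proj_props(1) span_mul)
  fix w assume w: "w \<in> span S"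
  have "c *\<^sub>R x - c *\<^sub>R proj S x = c *\<^sub>R (x - proj S x)" by (simp add: algebra_simps)
  then show "orthogonal (c *\<^sub>R x - c *\<^sub>R proj S x) w"
    unfolding \<open>c *\<^sub>R x - c *\<^sub>R proj S x = c *\<^sub>R (x - proj S x)\<close> using proj_props(2)[OF w, of x] by (simp add: orthogonal_def)
qed

lemma proj_sym: "inner (proj S x) z = inner x (proj S z)"
proof -
  have "inner (proj S x) z = inner (proj S x) (proj S z)"
    using proj_props(2)[OF proj_props(1)[of S x], of z]
    by (simp add: orthogonal_def inner_diff_left inner_diff_right inner_commute)
  also have "\<dots> = inner x (proj S z)"
    using proj_props(2)[OF proj_props(1)[of S z], of x]
    by (simp add: orthogonal_def inner_diff_left)
  finally show ?thesis .
qed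

lemma inner_ext: "(\<And>z. inner u z = inner v z) \<Longrightarrow> (u::'a::real_inner) = v"
  by (metis inner_diff_left inner_eq_zero_iff right_minus_eq)

lemma sym_matrix:
  fixes B :: "real^'n^'n"
  assumes "\<And>x z. inner (B *v x) z = inner x (B *v z)"
  shows "transpose B = B"
  unfolding matrix_eq
proof
  fix x
  show "transpose B *v x = B *v x"
    by (rule inner_ext) (simp add: dot_lmul_matrix assms)
qed

lemma inner_transpose: "inner (transpose A *v z) w = inner z ((A::real^'n^'m) *v w)"
  by (simp add: dot_lmul_matrix)


lemma mp_exists:
  fixes A :: "real^'n^'m"
  shows "\<exists>Y::real^'m^'n. A ** Y ** A = A \<and> Y ** A ** Y = Y \<and>
           transpose (A ** Y) = A ** Y \<and> transpose (Y ** A) = Y ** A"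
proof -
  define R where "R = range (\<lambda>x. A *v x)"
  define W where "W = range (\<lambda>z. transpose A *v z)"
  have spanR: "span R = R" unfolding R_def
    by (metis span_UNIV span_linear_image matrix_vector_mul_linear )
  have spanW: "span W = W" unfolding W_def
    by (metis span_UNIV span_linear_image matrix_vector_mul_linear)
  have F2: "A *v (x - proj W x) = 0" for x
  proof -
    have "inner (A *v (x - proj W x)) z = 0" for z
    proof -
      have "transpose A *v z \<in> W" unfolding W_def by blast
      then have "transpose A *v z \<in> span W" using span_base by blast
      then have "inner (x - proj W x) (transpose A *v z) = 0"
        using proj_props(2) by (simp add: orthogonal_def)
      then show ?thesis by (metis dot_lmul_matrix inner_commute transpose_matrix_vector)
    qed
    then show ?thesis by (metis inner_eq_zero_iff)
  qed
  have F2': "A *v proj W x = A *v x" for x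
    using F2[of x] by (simp add: matrix_vector_mult_diff_distrib)
  have F3: "w = w'" if H: "w \<in> W" "w' \<in> W" "A *v w = A *v w'" for w w'
  proof -
    obtain z z' where "w = transpose A *v z" "w' = transpose A *v z'" using H W_def by blast
    then have "w - w' = transpose A *v (z - z')" by (simp add: matrix_vector_mult_diff_distrib)
    moreover have "A *v (w - w') = 0" using H by (simp add: matrix_vector_mult_diff_distrib)
    ultimately have "inner (w - w') (w - w') = 0" by (metis inner_transpose inner_zero_right)
    then show ?thesis by simp
  qed
  have PW: "proj W x \<in> W" for x using proj_props(1)[of W x] spanW by metis
  have PR: "\<exists>x. A *v x = proj R y" for y
  proof -
    have "proj R y \<in> R" using proj_props(1)[of R y] spanR by metis
    then show ?thesis unfolding R_def by auto
  qed
  define g where "g y = proj W (SOME x. A *v x = proj R y)" for y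
  have gW: "g y \<in> W" for y unfolding g_def by (rule PW)
  have gA: "A *v g y = proj R y" for y
    unfolding g_def F2' using someI_ex[OF PR[of y]] .
  have glin: "linear g"
  proof (rule linearI)
    fix x y
    show "g (x + y) = g x + g y"
      apply (rule F3[OF gW])
      using gW W_def spanW span_add apply (metis)
      by (simp add: gA proj_add matrix_vector_right_distrib)
  next
    fix c :: real and x
    show "g (c *\<^sub>R x) = c *\<^sub>R g x"
      apply (rule F3[OF gW])
      using gW spanW span_mul apply (metis)
      by (simp add: gA proj_scale matrix_vector_mult_scaleR)
  qed
  define Y where "Y = matrix g"
  have Yv: "Y *v y = g y" for y unfolding Y_def using matrix_vector_mul(2)[OF glin] by metis
  have ARx: "proj R (A *v x) = A *v x" for x by (rule proj_id) (simp add: R_def span_base)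
  have gAx: "g (A *v x) = proj W x" for x
    by (rule F3[OF gW PW]) (simp add: gA ARx F2')
  have 1: "A ** Y ** A = A" unfolding matrix_eq
    by (simp add: matrix_vector_mul_assoc[symmetric] Yv gA ARx)
  have 2: "Y ** A ** Y = Y" unfolding matrix_eq
    by (simp add: matrix_vector_mul_assoc[symmetric] Yv gAx proj_id spanW gW)
  have 3: "transpose (A ** Y) = A ** Y"
    by (rule sym_matrix) (simp add: matrix_vector_mul_assoc[symmetric] Yv gA proj_sym)
  have 4: "transpose (Y ** A) = Y ** A"
    by (rule sym_matrix) (simp add: matrix_vector_mul_assoc[symmetric] Yv gAx proj_sym)
  show ?thesis using 1 2 3 4 by blast
qed


definition mpc :: "real^'n^'m \<Rightarrow> real^'m^'n \<Rightarrow> bool" where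
  "mpc A Y \<longleftrightarrow> A ** Y ** A = A \<and> Y ** A ** Y = Y \<and>
           transpose (A ** Y) = A ** Y \<and> transpose (Y ** A) = Y ** A"

lemma mp_unique:
  assumes "mpc A Y1" "mpc A Y2" shows "Y1 = Y2"
proof -
  have a: "A ** Y1 ** A = A" "Y1 ** A ** Y1 = Y1" "transpose (A ** Y1) = A ** Y1" "transpose (Y1 ** A) = Y1 ** A"
   and b: "A ** Y2 ** A = A" "Y2 ** A ** Y2 = Y2" "transpose (A ** Y2) = A ** Y2" "transpose (Y2 ** A) = Y2 ** A"
    using assms unfolding mpc_def by auto
  have AY: "A ** Y1 = A ** Y2"
  proof -
    have "A ** Y1 = transpose (A ** Y1)" using a by simp
    also have "\<dots> = transpose Y1 ** transpose (A ** Y2 ** A)" using b by (simp add: matrix_transpose_mul)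
    also have "\<dots> = transpose (A ** Y1) ** transpose (A ** Y2)" by (simp add: matrix_transpose_mul matrix_mul_assoc)
    also have "\<dots> = A ** Y1 ** A ** Y2" using a b by (simp add: matrix_mul_assoc)
    also have "\<dots> = A ** Y2" using a by simp
    finally show ?thesis .
  qed
  have YA: "Y1 ** A = Y2 ** A"
  proof -
    have "Y1 ** A = transpose (Y1 ** A)" using a by simp
    also have "\<dots> = transpose (A ** Y2 ** A) ** transpose Y1" using b by (simp add: matrix_transpose_mul)
    also have "\<dots> = transpose (Y2 ** A) ** transpose (Y1 ** A)" by (simp add: matrix_transpose_mul matrix_mul_assoc)
    also have "\<dots> = Y2 ** A ** (Y1 ** A)" using a b by simp
    also have "\<dots> = Y2 ** A" using a by (metis matrix_mul_assoc)
    finally show ?thesis .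
  qed
  have "Y1 = Y1 ** A ** Y1" using a by simp
  also have "\<dots> = Y1 ** A ** Y2" using AY by (metis matrix_mul_assoc)
  also have "\<dots> = Y2 ** A ** Y2" using YA by simp
  also have "\<dots> = Y2" using b by simp
  finally show ?thesis .
qed

lemma weight_simps:
  assumes "is_weight W"
  shows "transpose W = W" "W ** W = mat 1" "B ** W ** W = B" "W *v (W *v x) = x"
  using assms unfolding is_weight_def
  by (auto simp: matrix_mul_assoc[symmetric] matrix_vector_mul_assoc)


definition icond :: "real^'m^'m \<Rightarrow> real^'n^'n \<Rightarrow> real^'n^'m \<Rightarrow> real^'m^'n \<Rightarrow> bool" where
  "icond M N A X \<longleftrightarrow>
      iprod M (iprod N A X) A = A \<and>
      iprod N (iprod M X A) X = X \<and>
      iadj M M (iprod N A X) = iprod N A X \<and>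
      iadj N N (iprod M X A) = iprod M X A"

lemma icond_expand:
  "icond M N A X \<longleftrightarrow> A ** N ** X ** M ** A = A \<and> X ** M ** A ** N ** X = X \<and>
     M ** transpose (A ** N ** X) ** M = A ** N ** X \<and> N ** transpose (X ** M ** A) ** N = X ** M ** A"
  unfolding icond_def iprod_def iadj_def by simp

lemma icond_of_mpc:
  assumes M: "is_weight M" and N: "is_weight N" and Y: "mpc A Y"
  shows "icond M N A (N ** Y ** M)"
proof -
  note wM = weight_simps[OF M] and wN = weight_simps[OF N]
  have a: "A ** Y ** A = A" "Y ** A ** Y = Y" "transpose (A ** Y) = A ** Y" "transpose (Y ** A) = Y ** A"
    using Y unfolding mpc_def by auto
  have e1: "A ** N ** (N ** Y ** M) = A ** Y ** M" by (simp add: matrix_mul_assoc wN)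
  have e2: "N ** Y ** A = N ** (Y ** A)" by (simp add: matrix_mul_assoc)
  show ?thesis unfolding icond_expand
  proof (intro conjI)
    show "A ** N ** (N ** Y ** M) ** M ** A = A" unfolding e1 by (simp add: wM a)
    show "N ** Y ** M ** M ** A ** N ** (N ** Y ** M) = N ** Y ** M"
    proof -
      have "N ** Y ** A ** Y = N ** Y" by (metis a(2) matrix_mul_assoc)
      then show ?thesis by (simp add: matrix_mul_assoc wM wN)
    qed
    show "M ** transpose (A ** N ** (N ** Y ** M)) ** M = A ** N ** (N ** Y ** M)"
      unfolding e1 matrix_transpose_mul[of "A ** Y" M] a wM
      by (simp add: matrix_mul_assoc wM)
    show "N ** transpose (N ** Y ** M ** M ** A) ** N = N ** Y ** M ** M ** A"
    proof -
      have "transpose (N ** Y ** A) = transpose (Y ** A) ** N"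
        by (simp add: matrix_transpose_mul matrix_mul_assoc wN)
      then have "transpose (N ** Y ** A) = Y ** A ** N" using a by simp
      then show ?thesis by (simp add: matrix_mul_assoc wM wN)
    qed
  qed
qed

lemma mpc_of_icond:
  assumes M: "is_weight M" and N: "is_weight N" and X: "icond M N A X"
  shows "mpc A (N ** X ** M)"
proof -
  note wM = weight_simps[OF M] and wN = weight_simps[OF N]
  have a: "A ** N ** X ** M ** A = A" "X ** M ** A ** N ** X = X"
     "M ** transpose (A ** N ** X) ** M = A ** N ** X" "N ** transpose (X ** M ** A) ** N = X ** M ** A"
    using X unfolding icond_expand by auto
  show ?thesis unfolding mpc_def
  proof (intro conjI)
    show "A ** (N ** X ** M) ** A = A" using a(1) by (simp add: matrix_mul_assoc)
    have "N ** X ** M ** A ** (N ** X ** M) = N ** (X ** M ** A ** N ** X) ** M"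
      by (simp add: matrix_mul_assoc)
    then show "N ** X ** M ** A ** (N ** X ** M) = N ** X ** M"
      using a(2) by simp
    have "transpose (A ** (N ** X ** M)) = M ** transpose (A ** N ** X)"
      by (simp add: matrix_mul_assoc matrix_transpose_mul wM)
    also have "\<dots> = M ** transpose (A ** N ** X) ** M ** M" by (simp add: wM)
    also have "\<dots> = A ** (N ** X ** M)" using a(3) by (simp add: matrix_mul_assoc)
    finally show "transpose (A ** (N ** X ** M)) = A ** (N ** X ** M)" .
    have "transpose (N ** X ** M ** A) = transpose (X ** M ** A) ** N"
      by (simp add: matrix_mul_assoc matrix_transpose_mul wN)
    also have "\<dots> = N ** N ** transpose (X ** M ** A) ** N" by (simp add: wN)
    also have "\<dots> = N ** (N ** transpose (X ** M ** A) ** N)" by (simp add: matrix_mul_assoc)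
    also have "\<dots> = N ** X ** M ** A" using a(4) by (simp add: matrix_mul_assoc)
    finally show "transpose (N ** X ** M ** A) = N ** X ** M ** A" .
  qed
qed

lemma impinv_icond:
  assumes M: "is_weight M" and N: "is_weight N"
  shows "icond M N A (impinv M N A)"
proof -
  obtain Y where Y: "mpc A Y" using mp_exists[of A] unfolding mpc_def by blast
  have ex: "\<exists>!X. icond M N A X"
  proof
    show "icond M N A (N ** Y ** M)" by (rule icond_of_mpc[OF M N Y])
    fix X assume "icond M N A X"
    then have "N ** X ** M = Y" using mp_unique[OF mpc_of_icond[OF M N] Y] by blast
    then have "N ** (N ** X ** M) ** M = N ** Y ** M" by simp
    then show "X = N ** Y ** M" by (simp add: matrix_mul_assoc weight_simps[OF N] weight_simps[OF M])
  qed
  show ?thesis using theI'[OF ex] unfolding impinv_def icond_def .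
qed


lemma inner_NN: assumes "is_weight N" shows "inner (N *v a) (N *v t) = inner a t"
proof -
  have "inner (N *v a) (N *v t) = inner (transpose N *v a) (N *v t)" using weight_simps[OF assms] by simp
  also have "\<dots> = inner a (N *v (N *v t))" by (rule inner_transpose)
  finally show ?thesis using weight_simps[OF assms] by simp
qed

lemma bipolar:
  assumes N: "is_weight N" and K: "convex_cone K" "closed K"
    and z: "\<And>k. k \<in> idual N K \<Longrightarrow> 0 \<le> inner z (N *v k)"
  shows "z \<in> K"
proof (rule ccontr)
  assume "z \<notin> K"
  have cK: "convex K" "conic K" using K(1) by (auto simp: convex_cone_def)
  from \<open>z \<notin> K\<close> obtain a b where ab: "inner a z < b" "\<And>x. x \<in> K \<Longrightarrow> inner a x > b"
    using separating_hyperplane_closed_point[of K z] K(2) cK by blast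
  have "0 \<in> K" using convex_cone_contains_0[OF K(1)] .
  then have b0: "b < 0" using ab(2)[of 0] by simp
  have pos: "inner a x \<ge> 0" if x: "x \<in> K" for x
  proof (rule ccontr)
    assume neg: "\<not> inner a x \<ge> 0"
    define c where "c = b / inner a x"
    have c0: "c \<ge> 0" using neg b0 unfolding c_def by (simp add: divide_nonpos_neg)
    have "c *\<^sub>R x \<in> K" using cK(2) x c0 unfolding conic_def by blast
    then have "inner a (c *\<^sub>R x) > b" by (rule ab(2))
    moreover have "inner a (c *\<^sub>R x) = b" using neg unfolding c_def by simp
    ultimately show False by simp
  qed
  have "N *v a \<in> idual N K"
    unfolding idual_def using pos inner_NN[OF N] by simp
  then have "0 \<le> inner z (N *v (N *v a))" by (rule z)
  then show False using ab(1) b0 weight_simps(4)[OF N] by (simp add: inner_commute)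
qed


theorem lemma3p6:
  fixes M :: "real^'m^'m" and N :: "real^'n^'n" and A :: "real^'n^'m"
    and K :: "(real^'n) set"
  assumes "is_weight M" and "is_weight N"
    and "M ** A = A ** N"
    and "convex_cone K" and "closed K"
  shows "idual M ((\<lambda>k. iprodv N (iprod N (iadj N M (impinv M N A)) (mat 1)) k) ` idual N K)
           \<subseteq> msum ((\<lambda>k. iprodv N (iprod N A (mat 1)) k) ` K)
                   (inull M (iadj M N (iprod N A (mat 1))))
         \<and> ((\<lambda>k. iprodv N (iprod M (impinv M N A) A) k) ` K \<subseteq> K \<longrightarrow>
         idual M ((\<lambda>k. iprodv N (iprod N (iadj N M (impinv M N A)) (mat 1)) k) ` idual N K)
           = msum ((\<lambda>k. iprodv N (iprod N A (mat 1)) k) ` K)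
                   (inull M (iadj M N (iprod N A (mat 1)))))"
proof -
  note Mw = assms(1) and Nw = assms(2) and MA = assms(3)
  note wM = weight_simps[OF Mw] and wN = weight_simps[OF Nw]
  define X where "X = impinv M N A"
  have P: "A ** N ** X ** M ** A = A" "X ** M ** A ** N ** X = X"
     "M ** transpose (A ** N ** X) ** M = A ** N ** X"
    using impinv_icond[OF Mw Nw, of A] unfolding X_def[symmetric] icond_expand by auto
  define Q where "Q = A ** N ** X"
  have AtM: "transpose A ** M = N ** transpose A"
  proof -
    have "transpose (M ** A) = transpose (A ** N)" using MA by simp
    then show ?thesis by (simp add: matrix_transpose_mul wM wN)
  qed
  have AX: "A ** X = M ** Q"
  proof -
    have "M ** Q = (M ** A) ** N ** X" unfolding Q_def by (simp add: matrix_mul_assoc)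
    also have "\<dots> = A ** X" unfolding MA by (simp add: wN)
    finally show ?thesis by simp
  qed
  have QA: "Q ** A = A ** N"
  proof -
    have "Q ** A = Q ** (A ** N) ** N" by (simp add: matrix_mul_assoc wN)
    also have "\<dots> = Q ** M ** A ** N" unfolding MA[symmetric] by (simp add: matrix_mul_assoc)
    also have "\<dots> = A ** N" using P(1) unfolding Q_def by simp
    finally show ?thesis .
  qed
  have Qs: "M ** transpose Q ** M = Q" using P(3) unfolding Q_def .
  have K1: "transpose A ** A ** X = transpose A"
  proof -
    have "transpose A ** A ** X = transpose A ** M ** (M ** transpose Q ** M)"
      unfolding Qs by (simp add: matrix_mul_assoc[symmetric] AX)
    also have "\<dots> = transpose A ** transpose Q ** M" by (simp add: matrix_mul_assoc wM)
    also have "\<dots> = transpose (Q ** A) ** M" by (simp add: matrix_transpose_mul)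
    also have "\<dots> = N ** (transpose A ** M)" unfolding QA by (simp add: matrix_transpose_mul wN matrix_mul_assoc)
    also have "\<dots> = transpose A" unfolding AtM by (simp add: matrix_mul_assoc wN)
    finally show ?thesis .
  qed
  have K2: "X ** transpose X ** transpose A = X"
  proof -
    have "X = X ** M ** Q" using P(2) unfolding Q_def by (simp add: matrix_mul_assoc)
    also have "\<dots> = X ** M ** (M ** transpose Q ** M)" using Qs by simp
    also have "\<dots> = X ** transpose Q ** M" by (simp add: matrix_mul_assoc wM)
    also have "\<dots> = X ** transpose X ** (N ** (transpose A ** M))"
      unfolding Q_def by (simp add: matrix_transpose_mul matrix_mul_assoc wN)
    also have "\<dots> = X ** transpose X ** transpose A" unfolding AtM by (simp add: matrix_mul_assoc wN)
    finally show ?thesis by simp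
  qed
  have S1: "(\<lambda>k. iprodv N (iprod N A (mat 1)) k) = (\<lambda>k. A *v k)"
    by (simp add: iprodv_def iprod_def matrix_vector_mul_assoc wN)
  have S3: "inull M (iadj M N (iprod N A (mat 1))) = {x. transpose A *v x = 0}"
    unfolding inull_def iprodv_def iadj_def iprod_def
    by (simp add: matrix_transpose_mul matrix_vector_mul_assoc[symmetric] wN wM)
  have S4: "iprodv N (iprod M X A) k = X *v (M *v (A *v (N *v k)))" for k
    by (simp add: iprodv_def iprod_def matrix_vector_mul_assoc matrix_mul_assoc)
  have LHS: "idual M ((\<lambda>k. iprodv N (iprod N (iadj N M X) (mat 1)) k) ` idual N K)
     = {y. \<forall>k\<in>idual N K. 0 \<le> inner (X *v y) (N *v k)}"
  proof -
    have "inner y (M *v iprodv N (iprod N (iadj N M X) (mat 1)) k) = inner (X *v y) (N *v k)" for y k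
    proof -
      have "M *v iprodv N (iprod N (iadj N M X) (mat 1)) k = transpose X *v (N *v k)"
        by (simp add: iprodv_def iprod_def iadj_def matrix_vector_mul_assoc[symmetric] wN wM)
      then show ?thesis by (metis dot_lmul_matrix inner_commute transpose_matrix_vector)
    qed
    then show ?thesis unfolding idual_def by auto
  qed
  have sub: "idual M ((\<lambda>k. iprodv N (iprod N (iadj N M X) (mat 1)) k) ` idual N K)
           \<subseteq> msum ((\<lambda>k. iprodv N (iprod N A (mat 1)) k) ` K) (inull M (iadj M N (iprod N A (mat 1))))"
  proof
    fix y assume "y \<in> idual M ((\<lambda>k. iprodv N (iprod N (iadj N M X) (mat 1)) k) ` idual N K)"
    then have "\<forall>k\<in>idual N K. 0 \<le> inner (X *v y) (N *v k)" unfolding LHS by simp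
    then have z: "X *v y \<in> K" using bipolar[OF Nw assms(4,5)] by blast
    have e: "transpose A *v (A *v (X *v y)) = transpose A *v y" using K1 by (metis matrix_vector_mul_assoc)
    have "transpose A *v (y - A *v (X *v y)) = 0"
      unfolding matrix_vector_mult_diff_distrib e by simp
    then show "y \<in> msum ((\<lambda>k. iprodv N (iprod N A (mat 1)) k) ` K) (inull M (iadj M N (iprod N A (mat 1))))"
      unfolding S1 S3 msum_def using z
      by (intro CollectI exI[of _ "A *v (X *v y)"] exI[of _ "y - A *v (X *v y)"]) auto
  qed
  have sup: "msum ((\<lambda>k. iprodv N (iprod N A (mat 1)) k) ` K) (inull M (iadj M N (iprod N A (mat 1))))
      \<subseteq> idual M ((\<lambda>k. iprodv N (iprod N (iadj N M X) (mat 1)) k) ` idual N K)"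
    if H: "(\<lambda>k. iprodv N (iprod M X A) k) ` K \<subseteq> K"
  proof
    fix y assume "y \<in> msum ((\<lambda>k. iprodv N (iprod N A (mat 1)) k) ` K) (inull M (iadj M N (iprod N A (mat 1))))"
    then obtain k0 u where k0: "k0 \<in> K" and u: "transpose A *v u = 0" and y: "y = A *v k0 + u"
      unfolding S1 S3 msum_def by auto
    have Xu: "X *v u = 0"
    proof -
      have "X *v u = (X ** transpose X ** transpose A) *v u" using K2 by simp
      also have "\<dots> = X *v (transpose X *v (transpose A *v u))" by (simp only: matrix_vector_mul_assoc matrix_mul_assoc)
      also have "\<dots> = 0" unfolding u by simp
      finally show ?thesis .
    qed
    have "X *v (A *v k0) = X *v (M *v (A *v (N *v k0)))"
    proof -
      have "X ** M ** A ** N = X ** (M ** (M ** A))" unfolding MA by (simp add: matrix_mul_assoc)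
      also have "\<dots> = X ** A" by (simp add: matrix_mul_assoc wM)
      finally show ?thesis by (simp add: matrix_vector_mul_assoc matrix_mul_assoc)
    qed
    also have "\<dots> \<in> K" using H k0 unfolding S4 by blast
    finally have Xy: "X *v y \<in> K" unfolding y by (simp add: matrix_vector_right_distrib Xu)
    show "y \<in> idual M ((\<lambda>k. iprodv N (iprod N (iadj N M X) (mat 1)) k) ` idual N K)"
      unfolding LHS
    proof (intro CollectI ballI)
      fix k assume "k \<in> idual N K"
      moreover have "inner (N *v k) (X *v y) = inner k (N *v (X *v y))"
        using inner_transpose[of N k] wN(1) by metis
      ultimately show "0 \<le> inner (X *v y) (N *v k)" using Xy unfolding idual_def by (auto simp: inner_commute)
    qed
  qed
  show ?thesis unfolding X_def[symmetric] using sub sup by blast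
qed

end
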